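(* Let $\mathbf{x}_1,\dots,\mathbf{x}_n$ be examples, let $f$ be a feature map sending each example to a vector in $\mathbb{R}^d$, and let $W^I=(\mathbf{w}^I_1,\dots,\mathbf{w}^I_n)\in\mathbb{R}^{d\times n}$. Each example $\mathbf{x}_i$ has instance label $y_i^I=i$ and a target label $y_i^F\in\{1,\dots,F\}$, where every target class contains exactly $z$ examples, so that $zF=n$. Define \[\Pr\{y_i^I\mid f(\mathbf{x}_i),W^I\}=\frac{\exp(f(\mathbf{x}_i)^\top\mathbf{w}^I_{y_i^I})}{\sum_{j=1}^n\exp(f(\mathbf{x}_i)^\top\mathbf{w}^I_j)},\qquad \Pr\{y_i^F\mid f(\mathbf{x}_i),W^I\}=\frac{\exp(f(\mathbf{x}_i)^\top\bar{\mathbf{w}}^I_{y_i^F})}{\sum_{s=1}^F\exp(f(\mathbf{x}_i)^\top\bar{\mathbf{w}}^I_s)},\] where $\bar{\mathbf{w}}^I_s=\frac1z\sum_{j:\,y_j^F=s}\mathbf{w}^I_j$. If $\Pr\{y_i^I\mid f(\mathbf{x}_i),W^I\}\ge\alpha$ for all $i$, then for all $i$, \[\Pr\{y_i^F\mid f(\mathbf{x}_i),W^I\}\ge z\alpha\exp\big(f(\mathbf{x}_i)^\top(\bar{\mathbf{w}}^I_{y_i^F}-\mathbf{w}^I_{y_i^I})\big).\]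
   Context: This setting models instance classification: each of the $n$ examples is treated as its own class, $f$ is the feature extractor (the convolutional layers of a network) and $W^I$ is the weight matrix of the final fully-connected layer, with no bias term. The target-class probability is computed with the class proxy $\bar{\mathbf{w}}^I_s$, the mean of the instance weight vectors belonging to target class $s$. *)

theory Defs
  imports "HOL-Analysis.Analysis"
begin

text \<open>Examples are indexed by 0..n-1 (instance label of example i is i itself);
 target classes are indexed by 0..F-1. fx i is the feature vector f(x_i),
 w j is the j-th column of W^I, yF i is the target label of example i.\<close>

definition inst_prob :: "nat \<Rightarrow> (nat \<Rightarrow> real^'d) \<Rightarrow> (nat \<Rightarrow> real^'d) \<Rightarrow> nat \<Rightarrow> real" where
  "inst_prob n fx w i = exp (fx i \<bullet> w i) / (\<Sum>j<n. exp (fx i \<bullet> w j))"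

definition class_proxy :: "nat \<Rightarrow> nat \<Rightarrow> (nat \<Rightarrow> nat) \<Rightarrow> (nat \<Rightarrow> real^'d) \<Rightarrow> nat \<Rightarrow> real^'d" where
  "class_proxy n z yF w s = (1 / real z) *\<^sub>R (\<Sum>j\<in>{j. j < n \<and> yF j = s}. w j)"

definition target_prob :: "nat \<Rightarrow> nat \<Rightarrow> nat \<Rightarrow> (nat \<Rightarrow> nat) \<Rightarrow> (nat \<Rightarrow> real^'d) \<Rightarrow> (nat \<Rightarrow> real^'d) \<Rightarrow> nat \<Rightarrow> real" where
  "target_prob n F z yF fx w i =
     exp (fx i \<bullet> class_proxy n z yF w (yF i)) / (\<Sum>s<F. exp (fx i \<bullet> class_proxy n z yF w s))"

end

theory Submission
  imports Defs
begin

lemma jensen_exp: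
  fixes a :: "nat \<Rightarrow> real"
  assumes "finite S" "S \<noteq> {}"
  shows "exp ((1 / real (card S)) * (\<Sum>j\<in>S. a j)) \<le> (1 / real (card S)) * (\<Sum>j\<in>S. exp (a j))"
proof -
  have c: "card S > 0" using assms by (simp add: card_gt_0_iff)
  have "exp (\<Sum>j\<in>S. (1 / real (card S)) *\<^sub>R a j) \<le> (\<Sum>j\<in>S. (1 / real (card S)) * exp (a j))"
    by (rule convex_on_sum[OF assms exp_convex]) (use c in auto)
  then show ?thesis by (simp add: sum_distrib_left)
qed

theorem lemma1:
  fixes n F z :: nat and yF :: "nat \<Rightarrow> nat"
    and fx w :: "nat \<Rightarrow> real^'d" and \<alpha> :: real
  assumes labels: "\<forall>i<n. yF i < F"
    and class_size: "\<forall>s<F. card {j. j < n \<and> yF j = s} = z"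
    and zF: "z * F = n"
    and hyp: "\<forall>i<n. inst_prob n fx w i \<ge> \<alpha>"
  shows "\<forall>i<n. target_prob n F z yF fx w i
            \<ge> real z * \<alpha> * exp (fx i \<bullet> (class_proxy n z yF w (yF i) - w i))"
proof (intro allI impI)
  fix i assume i: "i < n"
  define a where "a j = fx i \<bullet> w j" for j
  define C where "C s = {j. j < n \<and> yF j = s}" for s
  define m where "m s = (1 / real z) * (\<Sum>j\<in>C s. a j)" for s
  have finC: "finite (C s)" for s unfolding C_def by auto
  have iC: "i \<in> C (yF i)" using i unfolding C_def by auto
  have zpos: "z > 0" using class_size labels i iC finC
    by (metis C_def card_gt_0_iff empty_iff)
  have proxy: "fx i \<bullet> class_proxy n z yF w s = m s" for s
    unfolding class_proxy_def m_def a_def C_def by (simp add: inner_sum_right)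
  define S where "S = (\<Sum>j<n. exp (a j))"
  have Spos: "S > 0" unfolding S_def using i by (intro sum_pos) auto
  have jen: "exp (m s) \<le> (1 / real z) * (\<Sum>j\<in>C s. exp (a j))" if "s < F" for s
  proof -
    have cs: "card (C s) = z" using class_size that unfolding C_def by auto
    then have "C s \<noteq> {}" using zpos by auto
    from jensen_exp[OF finC this, of a] cs show ?thesis unfolding m_def by simp
  qed
  have "(\<Sum>s<F. exp (m s)) \<le> (\<Sum>s<F. (1 / real z) * (\<Sum>j\<in>C s. exp (a j)))"
    by (rule sum_mono) (use jen in auto)
  also have "\<dots> = (1 / real z) * (\<Sum>s<F. \<Sum>j\<in>C s. exp (a j))"
    by (simp add: sum_distrib_left)
  also have "(\<Sum>s<F. \<Sum>j\<in>C s. exp (a j)) = S"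
    unfolding C_def S_def
    using sum.group[of "{..<n}" "{..<F}" yF "\<lambda>j. exp (a j)"] labels by auto
  finally have T: "(\<Sum>s<F. exp (m s)) \<le> S / real z" by simp
  have Tpos: "(\<Sum>s<F. exp (m s)) > 0"
    using labels i by (intro sum_pos) auto
  have tp: "target_prob n F z yF fx w i = exp (m (yF i)) / (\<Sum>s<F. exp (m s))"
    unfolding target_prob_def proxy ..
  have "exp (m (yF i)) / (S / real z) \<le> exp (m (yF i)) / (\<Sum>s<F. exp (m s))"
    by (rule divide_left_mono[OF T]) (use Tpos zpos Spos in auto)
  moreover have "\<alpha> \<le> exp (a i) / S"
    using hyp i unfolding inst_prob_def a_def S_def by auto
  then have "\<alpha> * S \<le> exp (a i)" using Spos by (simp add: field_simps)
  then have "real z * \<alpha> * exp (m (yF i) - a i) \<le> exp (m (yF i)) / (S / real z)"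
    using Spos zpos by (simp add: exp_diff field_simps mult_left_mono)
  moreover have "fx i \<bullet> (class_proxy n z yF w (yF i) - w i) = m (yF i) - a i"
    using proxy by (simp add: inner_diff_right a_def)
  ultimately show "target_prob n F z yF fx w i
            \<ge> real z * \<alpha> * exp (fx i \<bullet> (class_proxy n z yF w (yF i) - w i))"
    using tp by simp
qed

end
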